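(* Let $M$ be a matroid on ground set $S$, let $g\geq 3$ be an integer, and let $\mathcal{C}$ be a family of circuits of $M$ such that for every $1\leq i\leq g-1$ and every $X\subseteq S$ with $|X|=i$ we have $|\{C\in\mathcal{C}:\ |X\cap C|\geq 2\}|\leq i-1$. Then in any rainbow circuit-free coloring of $M$ in which each color is used at most $g-1$ times, the number $q$ of distinct colors satisfies $|\mathcal{C}|/(g-2)\leq q\leq |S|-|\mathcal{C}|$.
   Context: A coloring of $S$ is a partition of $S$ into nonempty color classes; it is rainbow circuit-free if no circuit of $M$ has all its elements of pairwise different colors. *)

theory Defs
  imports Complex_Main "HOL-Library.Disjoint_Sets"
begin

definition matroid :: "'a set \<Rightarrow> ('a set \<Rightarrow> bool) \<Rightarrow> bool" where
  "matroid S indep \<longleftrightarrow>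
     finite S \<and>
     (\<forall>X. indep X \<longrightarrow> X \<subseteq> S) \<and>
     indep {} \<and>
     (\<forall>X Y. indep X \<and> Y \<subseteq> X \<longrightarrow> indep Y) \<and>
     (\<forall>X Y. indep X \<and> indep Y \<and> card X < card Y \<longrightarrow>
        (\<exists>y\<in>Y - X. indep (insert y X)))"

definition circuit :: "'a set \<Rightarrow> ('a set \<Rightarrow> bool) \<Rightarrow> 'a set \<Rightarrow> bool" where
  "circuit S indep C \<longleftrightarrow> C \<subseteq> S \<and> \<not> indep C \<and> (\<forall>x\<in>C. indep (C - {x}))"

definition coloring :: "'a set \<Rightarrow> 'a set set \<Rightarrow> bool" where
  "coloring S P \<longleftrightarrow> partition_on S P"

definition rainbow_circuit_free :: "'a set \<Rightarrow> ('a set \<Rightarrow> bool) \<Rightarrow> 'a set set \<Rightarrow> bool" where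
  "rainbow_circuit_free S indep P \<longleftrightarrow>
     coloring S P \<and>
     \<not> (\<exists>C. circuit S indep C \<and> (\<forall>x\<in>C. \<forall>y\<in>C. x \<noteq> y \<longrightarrow>
              (\<forall>B\<in>P. \<not> (x \<in> B \<and> y \<in> B))))"

end

theory Submission
  imports Defs
begin

theorem theorem7:
  fixes S :: "'a set" and indep :: "'a set \<Rightarrow> bool" and g :: nat
    and \<C> :: "'a set set" and P :: "'a set set"
  assumes "matroid S indep"
    and "g \<ge> 3"
    and "\<forall>C\<in>\<C>. circuit S indep C"
    and "\<forall>i. 1 \<le> i \<and> i \<le> g - 1 \<longrightarrow>
           (\<forall>X. X \<subseteq> S \<and> card X = i \<longrightarrow> card {C\<in>\<C>. card (X \<inter> C) \<ge> 2} \<le> i - 1)"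
    and "rainbow_circuit_free S indep P"
    and "\<forall>B\<in>P. card B \<le> g - 1"
  shows "real (card \<C>) / real (g - 2) \<le> real (card P) \<and>
         real (card P) \<le> real (card S) - real (card \<C>)"
proof -
  have finS: "finite S" using assms(1) unfolding matroid_def by blast
  have part: "partition_on S P" using assms(5) unfolding rainbow_circuit_free_def coloring_def by blast
  have finP: "finite P" using finite_elements[OF finS part] .
  have PS: "\<And>B. B \<in> P \<Longrightarrow> B \<subseteq> S" using partition_onD1[OF part] by blast
  have finB: "\<And>B. B \<in> P \<Longrightarrow> finite B" using PS finS finite_subset by blast
  have neB: "\<And>B. B \<in> P \<Longrightarrow> card B \<ge> 1"
    using partition_onD3[OF part] finB by (metis One_nat_def Suc_leI card_gt_0_iff)
  define f where "f B = {C\<in>\<C>. card (B \<inter> C) \<ge> 2}" for B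
  have fle: "card (f B) \<le> card B - 1" if "B \<in> P" for B
  proof -
    have "1 \<le> card B \<and> card B \<le> g - 1" using neB[OF that] assms(6) that by blast
    hence "\<forall>X. X \<subseteq> S \<and> card X = card B \<longrightarrow> card {C\<in>\<C>. card (X \<inter> C) \<ge> 2} \<le> card B - 1"
      using assms(4) by blast
    thus ?thesis using PS[OF that] unfolding f_def by blast
  qed
  have cov: "\<C> \<subseteq> (\<Union>B\<in>P. f B)"
  proof
    fix C assume C: "C \<in> \<C>"
    have circ: "circuit S indep C" using assms(3) C by blast
    then obtain x y B where xy: "x \<in> C" "y \<in> C" "x \<noteq> y" "B \<in> P" "x \<in> B" "y \<in> B"
      using assms(5) unfolding rainbow_circuit_free_def by blast
    have "{x, y} \<subseteq> B \<inter> C" using xy by blast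
    hence "card {x,y} \<le> card (B \<inter> C)" using finB[OF xy(4)] by (intro card_mono) auto
    hence "card (B \<inter> C) \<ge> 2" using xy(3) by simp
    thus "C \<in> (\<Union>B\<in>P. f B)" using C xy(4) unfolding f_def by blast
  qed
  have "card \<C> \<le> card (\<Union>B\<in>P. f B)"
  proof (rule card_mono[OF _ cov])
    have "finite \<C>"
    proof (rule finite_subset)
      show "\<C> \<subseteq> Pow S" using assms(3) unfolding circuit_def by blast
    qed (use finS in simp)
    thus "finite (\<Union>B\<in>P. f B)" using finP unfolding f_def by auto
  qed
  also have "\<dots> \<le> (\<Sum>B\<in>P. card (f B))" using card_UN_le[OF finP] .
  finally have c1: "card \<C> \<le> (\<Sum>B\<in>P. card (f B))" .
  have s1: "(\<Sum>B\<in>P. card (f B)) \<le> (\<Sum>B\<in>P. card B - 1)" using fle by (rule sum_mono)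
  have s2: "(\<Sum>B\<in>P. card B - 1) \<le> (\<Sum>B\<in>P. g - 2)"
    by (rule sum_mono) (use assms(6) in force)
  have cS: "card S = (\<Sum>B\<in>P. card B)"
    using card_Union_disjoint[OF partition_onD2[OF part] finB] partition_onD1[OF part] by simp
  have s3: "(\<Sum>B\<in>P. card B - 1) + card P = (\<Sum>B\<in>P. card B)"
  proof -
    have "(\<Sum>B\<in>P. card B - 1) + card P = (\<Sum>B\<in>P. (card B - 1) + 1)"
      by (subst sum.distrib) simp
    also have "\<dots> = (\<Sum>B\<in>P. card B)" 
    proof (rule sum.cong)
      fix B assume "B \<in> P"
      hence "card B \<ge> 1" by (rule neB)
      thus "card B - 1 + 1 = card B" by linarith
    qed simp
    finally show ?thesis .
  qed
  have A: "card \<C> \<le> card P * (g - 2)" using c1 s1 s2 by (simp add: mult.commute)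
  have B: "card \<C> + card P \<le> card S" using c1 s1 s3 cS by linarith
  have g2: "real (g - 2) > 0" using assms(2) by simp
  have "real (card \<C>) \<le> real (card P) * real (g - 2)" using A
    by (metis of_nat_le_iff of_nat_mult)
  hence "real (card \<C>) / real (g - 2) \<le> real (card P)" using g2 by (simp add: divide_le_eq)
  moreover have "real (card P) \<le> real (card S) - real (card \<C>)" using B by linarith
  ultimately show ?thesis by blast
qed

end
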